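(* Let $b$ be a complex number and let $m\ge1$ be an integer. Then for all integers $n\ge 0$, $$D_{-m}(b;n)=\det\bigl(M_b(-m+i+j)\bigr)_{i,j=0}^{n-1}=p_{m+1}(-n).$$ Equivalently, $D_{-m}(b;n)=0$ for $1\le n\le m$, and $D_{-m}(b;n)=(-1)^{\binom{m+1}{2}}p_{m+1}(n-m-1)$ for $n\ge m+1$.
   Context: For a complex parameter $b$ and $n\ge0$, $M_b(n)=\sum_{k=0}^{n}\Bigl(\binom{n+k}{k}-\binom{n+k}{k-1}\Bigr)b^{n-k}$ (with $\binom{r}{-1}=0$), extended by $M_b(n)=0$ for $n<0$; equivalently $\sum_{n\ge0}M_b(n)x^n=\frac{C(x)}{1-bxC(x)}$ where $C(x)=\sum_{n\ge0}C_nx^n=\frac{1-\sqrt{1-4x}}{2x}$ is the Catalan generating function. For $m\in\mathbb Z$, $D_m(b;n)=\det(M_b(m+i+j))_{i,j=0}^{n-1}$, the $0\times0$ determinant being $1$. For an integer $m\ge0$, $p_m(n)$ is the polynomial $\prod_{1\le i\le j\le m-1}\frac{2n+i+j}{i+j}$ in $n$ (empty product $=1$). *)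

theory Defs
  imports "Jordan_Normal_Form.Determinant"
begin

text \<open>M_b(n) for integer n; zero for n < 0. The term binom(n+k, k-1) is 0 when k = 0.\<close>
definition Mb :: "complex \<Rightarrow> int \<Rightarrow> complex" where
  "Mb b n = (if n < 0 then 0 else
     (\<Sum>k\<in>{0..nat n}.
        (of_nat ((nat n + k) choose k)
         - (if k = 0 then 0 else of_nat ((nat n + k) choose (k - 1))))
        * b ^ (nat n - k)))"

definition Dm :: "int \<Rightarrow> complex \<Rightarrow> nat \<Rightarrow> complex" where
  "Dm m b n = det (mat n n (\<lambda>(i, j). Mb b (m + int i + int j)))"

definition pm :: "nat \<Rightarrow> complex \<Rightarrow> complex" where
  "pm m x = (\<Prod>(i, j)\<in>{(i, j). 1 \<le> i \<and> i \<le> j \<and> j \<le> m - 1}.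
               (2 * x + of_nat i + of_nat j) / (of_nat i + of_nat j))"

end

theory Submission
  imports Defs "HOL-Computational_Algebra.Formal_Power_Series"
begin

fun cat :: "nat \<Rightarrow> complex" where
 "cat 0 = 1" | "cat (Suc n) = (\<Sum>i\<le>n. cat i * cat (n - i))"

definition CC :: "complex fps" where "CC = Abs_fps cat"

lemma CC_eq: "CC = 1 + fps_X * CC^2"
proof (rule fps_ext)
  fix n show "fps_nth CC n = fps_nth (1 + fps_X * CC^2) n"
  proof (cases n)
    case 0 then show ?thesis by (simp add: CC_def)
  next
    case (Suc k)
    have "fps_nth (fps_X * CC^2) n = fps_nth (CC*CC) k" by (simp add: Suc fps_X_mult_nth power2_eq_square)
    also have "\<dots> = (\<Sum>i\<le>k. cat i * cat (k - i))" by (simp add: fps_mult_nth CC_def atLeast0AtMost)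
    finally show ?thesis by (simp add: Suc CC_def)
  qed
qed

lemma CC_pow_pascal: "fps_nth (CC^(r+1)) (Suc k) = fps_nth (CC^r) (Suc k) + fps_nth (CC^(r+2)) k"
proof -
  have "CC^(r+1) = CC^r * (1 + fps_X * CC^2)" using CC_eq by (metis power_Suc2 Suc_eq_plus1)
  also have "\<dots> = CC^r + fps_X * CC^(r+2)" by (simp add: algebra_simps power_add power2_eq_square)
  finally have "CC^(r+1) = CC^r + fps_X * CC^(r+2)" .
  then have "fps_nth (CC^(r+1)) (Suc k) = fps_nth (CC^r + fps_X * CC^(r+2)) (Suc k)" by simp
  then show ?thesis by simp
qed

definition Tb :: "nat \<Rightarrow> nat \<Rightarrow> complex" where
  "Tb n k = of_nat ((n + k) choose k) - (if k = 0 then 0 else of_nat ((n + k) choose (k - 1)))"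

lemma Tb_0[simp]: "Tb n 0 = 1" by (simp add: Tb_def)

lemma Tb_diag1: "Tb n (Suc n) = 0"
proof -
  have "(n + Suc n) choose Suc n = (n + Suc n) choose n"
    by (metis add_Suc_right add_diff_cancel_right' binomial_symmetric le_add2 add.commute)
  then show ?thesis by (simp add: Tb_def)
qed

lemma Tb_pascal: "Tb (Suc n) (Suc k) = Tb n (Suc k) + Tb (Suc n) k"
proof (cases k)
  case 0
  then show ?thesis by (simp add: Tb_def)
next
  case (Suc j)
  have e1: "(Suc n + Suc k) choose Suc k = ((n + Suc k) choose Suc k) + ((n + Suc k) choose k)"
    by simp
  have e2: "(Suc n + Suc k) choose k = ((n + Suc k) choose k) + ((n + Suc k) choose j)"
    using Suc by simp
  show ?thesis using e1 e2 Suc by (simp add: Tb_def add_ac)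
qed

lemma CC_Tb: "k \<le> n + 1 \<Longrightarrow> fps_nth (CC^(n+1-k)) k = Tb n k"
proof (induction n arbitrary: k)
  case 0
  then consider "k = 0" | "k = 1" by linarith
  then show ?case
  proof cases
    case 1 then show ?thesis by (simp add: fps_nth_power_0 CC_def)
  next
    case 2 then show ?thesis by (simp add: Tb_def)
  qed
next
  case (Suc n)
  note outer = Suc.IH
  show ?case using Suc.prems
  proof (induction k)
    case 0 then show ?case by (simp add: fps_nth_power_0 CC_def)
  next
    case (Suc k)
    show ?case
    proof (cases "Suc k = Suc n + 1")
      case True
      then show ?thesis using Tb_diag1[of "Suc n"] by simp
    next
      case False
      then have kn: "Suc k \<le> n + 1" using Suc.prems by simp
      have "fps_nth (CC^(Suc n + 1 - Suc k)) (Suc k) = fps_nth (CC^((n - k) + 1)) (Suc k)"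
        using kn by (simp add: Suc_diff_le)
      also have "\<dots> = fps_nth (CC^(n-k)) (Suc k) + fps_nth (CC^(n - k + 2)) k" by (rule CC_pow_pascal)
      also have "fps_nth (CC^(n-k)) (Suc k) = Tb n (Suc k)" using outer[OF kn] by simp
      also have "fps_nth (CC^(n - k + 2)) k = Tb (Suc n) k" 
      proof -
        have "k \<le> Suc n + 1" using kn by simp
        from Suc.IH[OF this] have "fps_nth (CC^(Suc n + 1 - k)) k = Tb (Suc n) k" .
        moreover have "Suc n + 1 - k = n - k + 2" using kn by simp
        ultimately show ?thesis by simp
      qed
      finally show ?thesis by (simp add: Tb_pascal)
    qed
  qed
qed

lemma Mb_Tb: "Mb b (int n) = (\<Sum>k\<in>{0..n}. Tb n k * b^(n-k))"
  unfolding Mb_def Tb_def nat_int by simp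

lemma Mb_sum: "Mb b (int n) = (\<Sum>j\<in>{0..n}. b^j * fps_nth (CC^(j+1)) (n-j))"
proof -
  have "Mb b (int n) = (\<Sum>k\<in>{0..n}. Tb n k * b^(n-k))" by (rule Mb_Tb)
  also have "\<dots> = (\<Sum>j\<in>{0..n}. Tb n (n - j) * b^(n-(n-j)))"
    by (subst sum.atLeastAtMost_rev) simp
  also have "\<dots> = (\<Sum>j\<in>{0..n}. b^j * fps_nth (CC^(j+1)) (n-j))"
  proof (rule sum.cong)
    fix j assume "j \<in> {0..n}"
    then have j: "j \<le> n" by simp
    have "Tb n (n - j) = fps_nth (CC^(n+1-(n-j))) (n-j)" using CC_Tb[of "n-j" n] by simp
    also have "n+1-(n-j) = j+1" using j by simp
    finally show "Tb n (n - j) * b^(n-(n-j)) = b^j * fps_nth (CC^(j+1)) (n-j)"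
      using j by simp
  qed simp
  finally show ?thesis .
qed

definition AA :: "complex \<Rightarrow> complex fps" where "AA b = Abs_fps (\<lambda>n. Mb b (int n))"

definition qq :: "complex \<Rightarrow> complex fps" where "qq b = fps_const b * fps_X * CC"

lemma qq_pow_nth: "fps_nth (qq b ^ j * CC) n = (if n < j then 0 else b^j * fps_nth (CC^(j+1)) (n - j))"
proof -
  have "qq b ^ j = fps_const (b^j) * fps_X^j * CC^j"
    by (simp add: qq_def power_mult_distrib fps_const_power)
  then have e: "qq b ^ j * CC = fps_const (b^j) * (fps_X^j * CC^(j+1))"
    by (simp add: mult_ac)
  show ?thesis unfolding e by (simp add: fps_X_power_mult_nth)
qed

lemma nth_mult_agree:
  assumes "\<And>i. i \<le> n \<Longrightarrow> fps_nth f i = fps_nth g i"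
  shows "fps_nth (f * h) n = fps_nth (g * h) n"
  using assms by (simp add: fps_mult_nth)

lemma AA_nth_partial:
  assumes "i \<le> n"
  shows "fps_nth (AA b) i = fps_nth (\<Sum>j<Suc n. qq b ^ j * CC) i"
proof -
  have "fps_nth (\<Sum>j<Suc n. qq b ^ j * CC) i = (\<Sum>j<Suc n. fps_nth (qq b ^ j * CC) i)"
    by (simp add: fps_sum_nth)
  also have "\<dots> = (\<Sum>j<Suc n. if i < j then 0 else b^j * fps_nth (CC^(j+1)) (i - j))"
    by (simp add: qq_pow_nth)
  also have "\<dots> = (\<Sum>j\<in>{0..i}. b^j * fps_nth (CC^(j+1)) (i - j))"
    by (rule sum.mono_neutral_cong_right) (use assms in auto)
  also have "\<dots> = Mb b (int i)" by (simp add: Mb_sum)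
  finally show ?thesis by (simp add: AA_def)
qed

lemma AA_qq: "AA b * (1 - qq b) = CC"
proof (rule fps_ext)
  fix n
  let ?S = "(\<Sum>j<Suc n. qq b ^ j * CC)"
  have "fps_nth (AA b * (1 - qq b)) n = fps_nth (?S * (1 - qq b)) n"
    by (rule nth_mult_agree) (rule AA_nth_partial)
  also have "?S * (1 - qq b) = CC - qq b ^ Suc n * CC"
  proof -
    have "?S = (\<Sum>j<Suc n. qq b ^ j) * CC" by (simp only: sum_distrib_right)
    then have "?S * (1 - qq b) = CC * ((1 - qq b) * (\<Sum>j<Suc n. qq b ^ j))" by (simp only: mult_ac)
    also have "\<dots> = CC * (1 - qq b ^ Suc n)" by (simp only: one_diff_power_eq)
    finally show ?thesis by (simp only: right_diff_distrib mult_1_right mult_1_left mult.commute)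
  qed
  also have "fps_nth (CC - qq b ^ Suc n * CC) n = fps_nth CC n"
  proof -
    have "fps_nth (qq b ^ Suc n * CC) n = 0" by (simp only: qq_pow_nth) simp
    then show ?thesis by simp
  qed
  finally show "fps_nth (AA b * (1 - qq b)) n = fps_nth CC n" .
qed

definition GG :: "complex \<Rightarrow> complex fps" where "GG b = 1 - fps_const b * fps_X - fps_X * CC"

lemma AA_GG: "AA b * GG b = 1"
proof -
  have XC: "fps_X * CC^2 = CC - 1" using CC_eq by (simp add: algebra_simps)
  have "GG b = (1 - qq b) * (1 - fps_X * CC)"
  proof -
    have "(1 - qq b) * (1 - fps_X * CC) = 1 - fps_X * CC - qq b + fps_const b * fps_X * (fps_X * CC^2)"
      by (simp add: qq_def algebra_simps power2_eq_square)
    also have "\<dots> = GG b" by (simp add: XC GG_def qq_def algebra_simps)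
    finally show ?thesis ..
  qed
  then have "AA b * GG b = CC * (1 - fps_X * CC)" by (simp add: AA_qq mult.assoc[symmetric])
  also have "\<dots> = 1" using XC by (simp add: algebra_simps power2_eq_square)
  finally show ?thesis .
qed

lemma GG_nth: "fps_nth (GG b) (Suc (Suc l)) = - cat (Suc l)"
  by (simp add: GG_def CC_def)
lemma GG_nth0: "fps_nth (GG b) 0 = 1" by (simp add: GG_def)
lemma AA_nth0: "fps_nth (AA b) 0 = 1" by (simp add: AA_def Mb_def)

lemma AA_GG_conv: "(\<Sum>t\<in>{0..c}. fps_nth (AA b) t * fps_nth (GG b) (c - t)) = (if c = 0 then 1 else 0)"
proof -
  have "fps_nth (AA b * GG b) c = (if c = 0 then 1 else 0)" by (simp add: AA_GG)
  then show ?thesis by (simp add: fps_mult_nth)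
qed

lemma cat_Tb: "cat n = Tb n n"
proof -
  have "fps_nth (CC^(n+1-n)) n = Tb n n" by (rule CC_Tb) simp
  then show ?thesis by (simp add: CC_def)
qed

lemma mult_entry:
  assumes "A \<in> carrier_mat n k" "B \<in> carrier_mat k m" "i < n" "j < m"
  shows "(A * B) $$ (i,j) = (\<Sum>t<k. A $$ (i,t) * B $$ (t,j))"
  using assms by (simp add: scalar_prod_def atLeast0LessThan)

lemma conv_shift:
  fixes a g :: "nat \<Rightarrow> complex"
  assumes "r \<le> d" "d < K"
  shows "(\<Sum>t<K. (if r \<le> t then a (t - r) else 0) * (if t \<le> d then g (d - t) else 0))
       = (\<Sum>s\<in>{0..d-r}. a s * g (d - r - s))"
proof -
  have "(\<Sum>t<K. (if r \<le> t then a (t - r) else 0) * (if t \<le> d then g (d - t) else 0))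
      = (\<Sum>t\<in>{r..d}. a (t - r) * g (d - t))"
    by (rule sum.mono_neutral_cong_right) (use assms in auto)
  also have "\<dots> = (\<Sum>s\<in>{0..d-r}. a s * g (d - r - s))"
  proof -
    have "(\<Sum>t\<in>{r..d}. a (t - r) * g (d - t)) = (\<Sum>s\<in>{0..d-r}. a (s + r - r) * g (d - (s + r)))"
      using sum.shift_bounds_cl_nat_ivl[of "\<lambda>t. a (t - r) * g (d - t)" 0 r "d-r"] assms by simp
    also have "\<dots> = (\<Sum>s\<in>{0..d-r}. a s * g (d - r - s))"
      by (rule sum.cong) (auto simp: diff_diff_left add.commute)
    finally show ?thesis .
  qed
  finally show ?thesis .
qed

lemma jacobi_toeplitz:
  fixes a g :: "nat \<Rightarrow> complex" and n N :: nat
  assumes a0: "a 0 = 1"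
    and conv: "\<And>c. (\<Sum>t\<in>{0..c}. a t * g (c - t)) = (if c = 0 then 1 else 0)"
  shows "det (mat n n (\<lambda>(i,j). if i \<le> N + j then a (N + j - i) else 0))
       = (-1)^(n*N) * det (mat N N (\<lambda>(i,p). if i \<le> n + p then g (n + p - i) else 0))"
proof -
  define K where "K = n + N"
  define U where "U = mat K K (\<lambda>(r,t). if r \<le> t then a (t - r) else 0)"
  define W where "W = mat K K (\<lambda>(t,c). if c < N then (if t \<le> n + c then g (n + c - t) else 0)
                                    else (if t = c then 1 else 0))"
  define P where "P = mat K K (\<lambda>(r,c). if c < N then (if r = n + c then 1 else 0)
                                    else (if r \<le> c then a (c - r) else 0))"
  define X where "X = mat n n (\<lambda>(i,j). if i \<le> N + j then a (N + j - i) else (0::complex))"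
  define Y where "Y = mat N n (\<lambda>(i,j). if n + i \<le> N + j then a (N + j - n - i) else (0::complex))"
  define W1 where "W1 = mat N N (\<lambda>(i,p). if i \<le> n + p then g (n + p - i) else (0::complex))"
  define W3 where "W3 = mat n N (\<lambda>(q,p). if N + q \<le> n + p then g (n + p - N - q) else (0::complex))"
  have U: "U \<in> carrier_mat K K" and W: "W \<in> carrier_mat K K" and P: "P \<in> carrier_mat K K"
    by (auto simp: U_def W_def P_def)
  have UW: "U * W = P"
  proof (rule eq_matI)
    fix r c assume rc: "r < dim_row P" "c < dim_col P"
    then have r: "r < K" and c: "c < K" by (auto simp: P_def)
    have "(U * W) $$ (r,c) = (\<Sum>t<K. U $$ (r,t) * W $$ (t,c))"
      by (rule mult_entry[OF U W r c])
    also have "\<dots> = P $$ (r,c)"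
    proof (cases "c < N")
      case True
      have "(\<Sum>t<K. U $$ (r,t) * W $$ (t,c))
         = (\<Sum>t<K. (if r \<le> t then a (t - r) else 0) * (if t \<le> n + c then g (n + c - t) else 0))"
        by (rule sum.cong) (use r c True in \<open>auto simp: U_def W_def\<close>)
      also have "\<dots> = (if r = n + c then 1 else 0)"
      proof (cases "r \<le> n + c")
        case True
        have "n + c < K" using \<open>c < N\<close> by (simp add: K_def)
        from conv_shift[OF True this, of a g] conv[of "n + c - r"] True show ?thesis by auto
      next
        case False
        then show ?thesis by (intro trans[OF sum.neutral]) auto
      qed
      finally show ?thesis using True r c by (simp add: P_def)
    next
      case False
      have "(\<Sum>t<K. U $$ (r,t) * W $$ (t,c)) = (\<Sum>t<K. if t = c then U $$ (r,t) else 0)"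
        by (rule sum.cong) (use False r c in \<open>auto simp: W_def\<close>)
      also have "\<dots> = U $$ (r,c)" using c by simp
      finally show ?thesis using False r c by (simp add: U_def P_def)
    qed
    finally show "(U * W) $$ (r,c) = P $$ (r,c)" .
  qed (use U W P in auto)
  have detU: "det U = 1"
  proof -
    have "upper_triangular U" by (auto simp: U_def upper_triangular_def)
    then have "det U = prod_list (diag_mat U)" using det_upper_triangular U by blast
    also have "diag_mat U = replicate K 1" 
      by (rule nth_equalityI) (auto simp: diag_mat_def U_def a0)
    finally show ?thesis by simp
  qed
  have detW: "det W = det W1"
  proof -
    have "W = four_block_mat W1 (0\<^sub>m N n) W3 (1\<^sub>m n)"
      by (rule eq_matI) (auto simp: W_def W1_def W3_def K_def)
    also have "det (four_block_mat W1 (0\<^sub>m N n) W3 (1\<^sub>m n)) = det W1 * det (1\<^sub>m n :: complex mat)"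
      by (rule det_four_block_mat_upper_right_zero) (auto simp: W1_def W3_def)
    finally show ?thesis by simp
  qed
  have detP: "det P = (-1)^(n*N) * det X"
  proof -
    have P': "P \<in> carrier_mat (n + N) (n + N)" using P by (simp add: K_def)
    have "det P = (-1)^(n*N) * det (mat (n + N) (n + N) (\<lambda>(i,j). P $$ (i, if j < n then j + N else j - n)))"
      by (rule det_swap_cols[OF P'])
    also have "mat (n + N) (n + N) (\<lambda>(i,j). P $$ (i, if j < n then j + N else j - n))
        = four_block_mat X (0\<^sub>m n N) Y (1\<^sub>m N)"
      by (rule eq_matI) (auto simp: P_def X_def Y_def K_def add_ac)
    also have "det \<dots> = det X * det (1\<^sub>m N :: complex mat)"
      by (rule det_four_block_mat_upper_right_zero) (auto simp: X_def Y_def)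
    finally show ?thesis by simp
  qed
  have "det P = det W1" using UW det_mult[OF U W] detU detW by simp
  then have "(-1)^(n*N) * det X = det W1" using detP by simp
  then have "det X = (-1)^(n*N) * det W1"
  proof -
    have s: "(-1::complex)^(n*N) * (-1)^(n*N) = 1" by (simp add: power_mult_distrib[symmetric])
    have "det X = ((-1)^(n*N) * (-1)^(n*N)) * det X" by (simp add: s)
    also have "\<dots> = (-1)^(n*N) * det W1" using \<open>(-1)^(n*N) * det X = det W1\<close> by (simp only: mult.assoc)
    finally show ?thesis .
  qed
  then show ?thesis by (simp add: X_def W1_def)
qed

lemma schur:
  fixes A B C D Ai :: "complex mat"
  assumes A: "A \<in> carrier_mat n n" and B: "B \<in> carrier_mat n m" and C: "C \<in> carrier_mat m n"
    and D: "D \<in> carrier_mat m m" and Ai: "Ai \<in> carrier_mat n n" and inv: "Ai * A = 1\<^sub>m n"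
  shows "det (four_block_mat A B C D) = det A * det (D - C * Ai * B)"
proof -
  define Q where "Q = four_block_mat (1\<^sub>m n) (0\<^sub>m n m) (- (C * Ai)) (1\<^sub>m m)"
  have CAi: "C * Ai \<in> carrier_mat m n" using C Ai by (rule mult_carrier_mat)
  have mCAi: "- (C * Ai) \<in> carrier_mat m n" using CAi by (rule uminus_carrier_mat)
  have CAiB: "C * Ai * B \<in> carrier_mat m m" using CAi B by (rule mult_carrier_mat)
  have Q: "Q \<in> carrier_mat (n+m) (n+m)" unfolding Q_def by (rule four_block_carrier_mat) simp_all
  have M: "four_block_mat A B C D \<in> carrier_mat (n+m) (n+m)" using A D by (rule four_block_carrier_mat)
  have "Q * four_block_mat A B C D = four_block_mat (1\<^sub>m n * A + 0\<^sub>m n m * C) (1\<^sub>m n * B + 0\<^sub>m n m * D)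
      (- (C * Ai) * A + 1\<^sub>m m * C) (- (C * Ai) * B + 1\<^sub>m m * D)"
    unfolding Q_def by (rule mult_four_block_mat[OF one_carrier_mat zero_carrier_mat mCAi one_carrier_mat A B C D])
  also have "1\<^sub>m n * A + 0\<^sub>m n m * C = A"
  proof -
    have "1\<^sub>m n * A = A" using A by (simp add: left_mult_one_mat)
    moreover have "0\<^sub>m n m * C = 0\<^sub>m n n" using C by (simp add: left_mult_zero_mat)
    ultimately show ?thesis using A by simp
  qed
  also have "1\<^sub>m n * B + 0\<^sub>m n m * D = B"
  proof -
    have "1\<^sub>m n * B = B" using B by (simp add: left_mult_one_mat)
    moreover have "0\<^sub>m n m * D = 0\<^sub>m n m" using D by (simp add: left_mult_zero_mat)
    ultimately show ?thesis using B by simp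
  qed
  also have "- (C * Ai) * A + 1\<^sub>m m * C = 0\<^sub>m m n"
  proof -
    have "- (C * Ai) * A = - (C * Ai * A)" by (rule uminus_mult_left_mat) (use Ai A in simp)
    also have "C * Ai * A = C * (Ai * A)" by (rule assoc_mult_mat[OF C Ai A])
    also have "\<dots> = C" using inv C by simp
    finally have e: "- (C * Ai) * A = - C" .
    have "1\<^sub>m m * C = C" using C by (simp add: left_mult_one_mat)
    then show ?thesis unfolding e using C by simp
  qed
  also have "- (C * Ai) * B + 1\<^sub>m m * D = D - C * Ai * B"
  proof -
    have e: "- (C * Ai) * B = - (C * Ai * B)" by (rule uminus_mult_left_mat) (use Ai B in simp)
    have "1\<^sub>m m * D = D" using D by (simp add: left_mult_one_mat)
    then have "- (C * Ai) * B + 1\<^sub>m m * D = - (C * Ai * B) + D" unfolding e by simp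
    also have "\<dots> = D + - (C * Ai * B)" by (rule comm_add_mat[OF uminus_carrier_mat[OF CAiB] D])
    also have "\<dots> = D - C * Ai * B" by (rule add_uminus_minus_mat[OF D CAiB])
    finally show ?thesis .
  qed
  finally have QM: "Q * four_block_mat A B C D = four_block_mat A B (0\<^sub>m m n) (D - C * Ai * B)" .
  have "det Q = det (1\<^sub>m n :: complex mat) * det (1\<^sub>m m :: complex mat)" unfolding Q_def
    by (rule det_four_block_mat_upper_right_zero[OF one_carrier_mat refl mCAi one_carrier_mat])
  then have dQ: "det Q = 1" by simp
  have "det (four_block_mat A B C D) = det (Q * four_block_mat A B C D)"
    using det_mult[OF Q M] dQ by simp
  also have "\<dots> = det A * det (D - C * Ai * B)" unfolding QM
    by (rule det_four_block_mat_lower_left_zero[OF A B refl]) (rule minus_carrier_mat[OF CAiB])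
  finally show ?thesis .
qed

lemma det2:
  fixes S :: "complex mat"
  assumes S: "S \<in> carrier_mat 2 2"
  shows "det S = S $$ (0,0) * S $$ (1,1) - S $$ (0,1) * S $$ (1,0)"
proof -
  define a where "a = mat 1 1 (\<lambda>_. S $$ (0,0))"
  define b where "b = mat 1 1 (\<lambda>_. S $$ (0,1))"
  define c where "c = mat 1 1 (\<lambda>_. S $$ (1,0))"
  define d where "d = mat 1 1 (\<lambda>_. S $$ (1,1))"
  have "S = four_block_mat a b c d"
    by (rule eq_matI) (use S in \<open>auto simp: a_def b_def c_def d_def less_Suc_eq\<close>)
  moreover have "det (four_block_mat a b c d) = det (a * d - b * c)"
    by (rule det_four_block_mat) (auto simp: a_def b_def c_def d_def intro!: eq_matI simp: scalar_prod_def)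
  moreover have "det (a * d - b * c) = (a * d - b * c) $$ (0,0)"
    by (rule det_single) (auto simp: a_def b_def c_def d_def)
  moreover have "(a * d - b * c) $$ (0,0) = S $$ (0,0) * S $$ (1,1) - S $$ (0,1) * S $$ (1,0)"
    by (auto simp: a_def b_def c_def d_def scalar_prod_def)
  ultimately show ?thesis by simp
qed

definition subm :: "complex mat \<Rightarrow> nat \<Rightarrow> nat \<Rightarrow> nat \<Rightarrow> complex mat" where
  "subm M n p q = mat (n+1) (n+1) (\<lambda>(i,j). M $$ (if i < n then i else n + p, if j < n then j else n + q))"

lemma desnanot_jacobi:
  fixes M :: "complex mat"
  assumes M: "M \<in> carrier_mat (n+2) (n+2)"
    and dA: "det (mat n n (\<lambda>(i,j). M $$ (i,j))) \<noteq> 0"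
  shows "det M * det (mat n n (\<lambda>(i,j). M $$ (i,j)))
       = det (subm M n 0 0) * det (subm M n 1 1) - det (subm M n 0 1) * det (subm M n 1 0)"
proof -
  define A where "A = mat n n (\<lambda>(i,j). M $$ (i,j))"
  define B where "B = mat n 2 (\<lambda>(i,j). M $$ (i,n+j))"
  define C where "C = mat 2 n (\<lambda>(i,j). M $$ (n+i,j))"
  define D where "D = mat 2 2 (\<lambda>(i,j). M $$ (n+i,n+j))"
  define Ai where "Ai = (1 / det A) \<cdot>\<^sub>m adj_mat A"
  have A: "A \<in> carrier_mat n n" and B: "B \<in> carrier_mat n 2" and C: "C \<in> carrier_mat 2 n"
    and D: "D \<in> carrier_mat 2 2" by (auto simp: A_def B_def C_def D_def)
  have dA': "det A \<noteq> 0" using dA by (simp add: A_def)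
  have Ai: "Ai \<in> carrier_mat n n" unfolding Ai_def using adj_mat(1)[OF A] by simp
  have inv: "Ai * A = 1\<^sub>m n"
  proof -
    have "Ai * A = (1 / det A) \<cdot>\<^sub>m (adj_mat A * A)" unfolding Ai_def
      by (rule mult_smult_assoc_mat[OF adj_mat(1)[OF A] A])
    also have "\<dots> = (1 / det A) \<cdot>\<^sub>m (det A \<cdot>\<^sub>m 1\<^sub>m n)" using adj_mat(3)[OF A] by simp
    also have "\<dots> = 1\<^sub>m n" using dA' by (intro eq_matI) auto
    finally show ?thesis .
  qed
  define S where "S = D - C * Ai * B"
  have CAi: "C * Ai \<in> carrier_mat 2 n" using C Ai by (rule mult_carrier_mat)
  have S: "S \<in> carrier_mat 2 2" unfolding S_def using mult_carrier_mat[OF CAi B] by (rule minus_carrier_mat)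
  have Sentry: "S $$ (p,q) = M $$ (n+p, n+q) - (\<Sum>t<n. (\<Sum>s<n. M $$ (n+p,s) * Ai $$ (s,t)) * M $$ (t,n+q))"
    if "p < 2" "q < 2" for p q
  proof -
    have "(C * Ai * B) $$ (p,q) = (\<Sum>t<n. (C * Ai) $$ (p,t) * B $$ (t,q))"
      by (rule mult_entry[OF CAi B that])
    also have "\<dots> = (\<Sum>t<n. (\<Sum>s<n. M $$ (n+p,s) * Ai $$ (s,t)) * M $$ (t,n+q))"
    proof (rule sum.cong)
      fix t assume "t \<in> {..<n}"
      then have t: "t < n" by simp
      have "(C * Ai) $$ (p,t) = (\<Sum>s<n. C $$ (p,s) * Ai $$ (s,t))" by (rule mult_entry[OF C Ai \<open>p<2\<close> t])
      also have "\<dots> = (\<Sum>s<n. M $$ (n+p,s) * Ai $$ (s,t))" by (rule sum.cong) (use that in \<open>auto simp: C_def\<close>)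
      finally show "(C * Ai) $$ (p,t) * B $$ (t,q) = (\<Sum>s<n. M $$ (n+p,s) * Ai $$ (s,t)) * M $$ (t,n+q)"
        using t that by (simp add: B_def)
    qed simp
    finally show ?thesis unfolding S_def using that C Ai B D
      by (simp add: D_def)
  qed
  have MS: "det M = det A * det S"
  proof -
    have "M = four_block_mat A B C D"
      by (rule eq_matI) (use M in \<open>auto simp: A_def B_def C_def D_def\<close>)
    then show ?thesis using schur[OF A B C D Ai inv] by (simp add: S_def)
  qed
  have sub: "det (subm M n p q) = det A * S $$ (p,q)" if "p < 2" "q < 2" for p q
  proof -
    define Bq where "Bq = mat n 1 (\<lambda>(i,j). M $$ (i,n+q))"
    define Cp where "Cp = mat 1 n (\<lambda>(i,j). M $$ (n+p,j))"
    define Dpq where "Dpq = mat 1 1 (\<lambda>(i,j). M $$ (n+p,n+q))"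
    have Bq: "Bq \<in> carrier_mat n 1" and Cp: "Cp \<in> carrier_mat 1 n" and Dpq: "Dpq \<in> carrier_mat 1 1"
      by (auto simp: Bq_def Cp_def Dpq_def)
    have CpAi: "Cp * Ai \<in> carrier_mat 1 n" using Cp Ai by (rule mult_carrier_mat)
    have CAB1: "Cp * Ai * Bq \<in> carrier_mat 1 1" using CpAi Bq by (rule mult_carrier_mat)
    have "subm M n p q = four_block_mat A Bq Cp Dpq"
      by (rule eq_matI) (auto simp: subm_def A_def Bq_def Cp_def Dpq_def)
    then have "det (subm M n p q) = det A * det (Dpq - Cp * Ai * Bq)"
      using schur[OF A Bq Cp Dpq Ai inv] by simp
    also have "det (Dpq - Cp * Ai * Bq) = (Dpq - Cp * Ai * Bq) $$ (0,0)"
      by (rule det_single) (rule minus_carrier_mat[OF CAB1])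
    also have "\<dots> = S $$ (p,q)"
    proof -
      have "(Cp * Ai * Bq) $$ (0,0) = (\<Sum>t<n. (Cp * Ai) $$ (0,t) * Bq $$ (t,0))"
        by (rule mult_entry[OF CpAi Bq]) auto
      also have "\<dots> = (\<Sum>t<n. (\<Sum>s<n. M $$ (n+p,s) * Ai $$ (s,t)) * M $$ (t,n+q))"
      proof (rule sum.cong)
        fix t assume "t \<in> {..<n}"
        then have t: "t < n" by simp
        have "(Cp * Ai) $$ (0,t) = (\<Sum>s<n. Cp $$ (0,s) * Ai $$ (s,t))" by (rule mult_entry[OF Cp Ai _ t]) simp
        also have "\<dots> = (\<Sum>s<n. M $$ (n+p,s) * Ai $$ (s,t))" by (rule sum.cong) (auto simp: Cp_def)
        finally show "(Cp * Ai) $$ (0,t) * Bq $$ (t,0) = (\<Sum>s<n. M $$ (n+p,s) * Ai $$ (s,t)) * M $$ (t,n+q)"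
          using t by (simp add: Bq_def)
      qed simp
      moreover have "(Dpq - Cp * Ai * Bq) $$ (0,0) = Dpq $$ (0,0) - (Cp * Ai * Bq) $$ (0,0)"
        by (rule index_minus_mat) (use CAB1 in auto)
      ultimately show ?thesis using Sentry[OF that] by (simp add: Dpq_def)
    qed
    finally show ?thesis .
  qed
  have "det M * det A = det A * det A * det S" using MS by simp
  also have "\<dots> = (det A * S $$ (0,0)) * (det A * S $$ (1,1)) - (det A * S $$ (0,1)) * (det A * S $$ (1,0))"
    unfolding det2[OF S] by (simp add: algebra_simps)
  also have "\<dots> = det (subm M n 0 0) * det (subm M n 1 1) - det (subm M n 0 1) * det (subm M n 1 0)"
    using sub by simp
  finally show ?thesis by (simp add: A_def)
qed

definition hank :: "(nat \<Rightarrow> complex) \<Rightarrow> nat \<Rightarrow> nat \<Rightarrow> complex" where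
  "hank f s n = det (mat n n (\<lambda>(i,j). f (i + j + s)))"

lemma swap_both:
  fixes F :: "nat \<Rightarrow> nat \<Rightarrow> complex" and n :: nat
  assumes "n + 1 \<le> m"
  shows "det (mat m m (\<lambda>(i,j). F i j)) = det (mat m m (\<lambda>(i,j).
     F (if i < n then i + 1 else if i < 1 + n then i - n else i)
       (if j < n then j + 1 else if j < 1 + n then j - n else j)))"
proof -
  let ?s = "\<lambda>i. if i < n then i + 1 else if i < 1 + n then i - n else i"
  have c1: "mat m m (\<lambda>(i,j). F i j) \<in> carrier_mat m m" by simp
  have "det (mat m m (\<lambda>(i,j). F i j)) = (-1)^(1*n) * det (mat m m (\<lambda>(i,j). mat m m (\<lambda>(i,j). F i j) $$ (?s i, j)))"
    by (rule det_swap_initial_rows[OF c1]) (use assms in simp)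
  also have "mat m m (\<lambda>(i,j). mat m m (\<lambda>(i,j). F i j) $$ (?s i, j)) = mat m m (\<lambda>(i,j). F (?s i) j)"
    by (rule eq_matI) (use assms in auto)
  also have "det (mat m m (\<lambda>(i,j). F (?s i) j)) = (-1)^(1*n) * det (mat m m (\<lambda>(i,j). mat m m (\<lambda>(i,j). F (?s i) j) $$ (i, ?s j)))"
    by (rule det_swap_initial_cols) (use assms in simp_all)
  also have "mat m m (\<lambda>(i,j). mat m m (\<lambda>(i,j). F (?s i) j) $$ (i, ?s j)) = mat m m (\<lambda>(i,j). F (?s i) (?s j))"
    by (rule eq_matI) (use assms in auto)
  finally show ?thesis by (simp add: power_mult_distrib[symmetric] mult.assoc[symmetric])
qed

lemma swap_rows1:
  fixes F :: "nat \<Rightarrow> nat \<Rightarrow> complex" and n :: nat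
  assumes "n + 1 \<le> m"
  shows "det (mat m m (\<lambda>(i,j). F i j)) = (-1)^n * det (mat m m (\<lambda>(i,j).
     F (if i < n then i + 1 else if i < 1 + n then i - n else i) j))"
proof -
  let ?s = "\<lambda>i. if i < n then i + 1 else if i < 1 + n then i - n else i"
  have c1: "mat m m (\<lambda>(i,j). F i j) \<in> carrier_mat m m" by simp
  have "det (mat m m (\<lambda>(i,j). F i j)) = (-1)^(1*n) * det (mat m m (\<lambda>(i,j). mat m m (\<lambda>(i,j). F i j) $$ (?s i, j)))"
    by (rule det_swap_initial_rows[OF c1]) (use assms in simp)
  also have "mat m m (\<lambda>(i,j). mat m m (\<lambda>(i,j). F i j) $$ (?s i, j)) = mat m m (\<lambda>(i,j). F (?s i) j)"
    by (rule eq_matI) (use assms in auto)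
  finally show ?thesis by simp
qed

lemma swap_cols1:
  fixes F :: "nat \<Rightarrow> nat \<Rightarrow> complex" and n :: nat
  assumes "n + 1 \<le> m"
  shows "det (mat m m (\<lambda>(i,j). F i j)) = (-1)^n * det (mat m m (\<lambda>(i,j).
     F i (if j < n then j + 1 else if j < 1 + n then j - n else j)))"
proof -
  let ?s = "\<lambda>i. if i < n then i + 1 else if i < 1 + n then i - n else i"
  have c1: "mat m m (\<lambda>(i,j). F i j) \<in> carrier_mat m m" by simp
  have "det (mat m m (\<lambda>(i,j). F i j)) = (-1)^(1*n) * det (mat m m (\<lambda>(i,j). mat m m (\<lambda>(i,j). F i j) $$ (i, ?s j)))"
    by (rule det_swap_initial_cols[OF c1]) (use assms in simp)
  also have "mat m m (\<lambda>(i,j). mat m m (\<lambda>(i,j). F i j) $$ (i, ?s j)) = mat m m (\<lambda>(i,j). F i (?s j))"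
    by (rule eq_matI) (use assms in auto)
  finally show ?thesis by simp
qed

lemma hankel_dj:
  assumes nz: "hank f 2 n \<noteq> 0"
  shows "hank f 0 (n+2) * hank f 2 n = hank f 0 (n+1) * hank f 2 (n+1) - hank f 1 (n+1) ^ 2"
proof -
  let ?s = "\<lambda>i. if i < n then i + 1 else if i < 1 + n then i - n else i"
  define M where "M = mat (n+2) (n+2) (\<lambda>(i,j). f (?s i + ?s j))"
  have M: "M \<in> carrier_mat (n+2) (n+2)" by (simp add: M_def)
  have h0: "hank f 0 (n+2) = det M"
    unfolding hank_def M_def using swap_both[of n "n+2" "\<lambda>i j. f (i + j)"] by simp
  have int: "mat n n (\<lambda>(i,j). M $$ (i,j)) = mat n n (\<lambda>(i,j). f (i + j + 2))"
    by (rule eq_matI) (auto simp: M_def)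
  have nz': "det (mat n n (\<lambda>(i,j). M $$ (i,j))) \<noteq> 0" unfolding int using nz by (simp add: hank_def)
  have s11: "subm M n 1 1 = mat (n+1) (n+1) (\<lambda>(i,j). f (i + j + 2))"
    by (rule eq_matI) (auto simp: subm_def M_def less_Suc_eq)
  have s00: "det (subm M n 0 0) = hank f 0 (n+1)"
  proof -
    have "subm M n 0 0 = mat (n+1) (n+1) (\<lambda>(i,j). f (?s i + ?s j))"
      by (rule eq_matI) (auto simp: subm_def M_def less_Suc_eq)
    then show ?thesis unfolding hank_def using swap_both[of n "n+1" "\<lambda>i j. f (i + j)"] by simp
  qed
  have s01: "det (subm M n 0 1) = (-1)^n * hank f 1 (n+1)"
  proof -
    have "subm M n 0 1 = mat (n+1) (n+1) (\<lambda>(i,j). f (?s i + j + 1))"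
      by (rule eq_matI) (auto simp: subm_def M_def less_Suc_eq)
    then show ?thesis unfolding hank_def using swap_rows1[of n "n+1" "\<lambda>i j. f (i + j + 1)"] by simp
  qed
  have s10: "det (subm M n 1 0) = (-1)^n * hank f 1 (n+1)"
  proof -
    have "subm M n 1 0 = mat (n+1) (n+1) (\<lambda>(i,j). f (i + ?s j + 1))"
      by (rule eq_matI) (auto simp: subm_def M_def less_Suc_eq)
    then show ?thesis unfolding hank_def using swap_cols1[of n "n+1" "\<lambda>i j. f (i + j + 1)"] by simp
  qed
  have "det M * hank f 2 n = hank f 0 (n+1) * hank f 2 (n+1) - ((-1)^n * hank f 1 (n+1)) * ((-1)^n * hank f 1 (n+1))"
  proof -
    have "det M * det (mat n n (\<lambda>(i,j). M $$ (i,j))) = det (subm M n 0 0) * det (subm M n 1 1) - det (subm M n 0 1) * det (subm M n 1 0)"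
      by (rule desnanot_jacobi[OF M nz'])
    then show ?thesis unfolding int s00 s01 s10 s11 by (simp add: hank_def)
  qed
  also have "((-1)^n * hank f 1 (n+1)) * ((-1)^n * hank f 1 (n+1)) = hank f 1 (n+1) ^ 2"
    by (simp add: power2_eq_square algebra_simps power_mult_distrib[symmetric])
  finally show ?thesis using h0 by simp
qed

definition Rr :: "nat \<Rightarrow> complex \<Rightarrow> complex" where
  "Rr a z = (\<Prod>i\<in>{1..a}. (2 * z + of_nat i + of_nat a) / (of_nat i + of_nat a))"

lemma pm_Suc: "pm (Suc a) z = pm a z * Rr a z"
proof -
  let ?f = "\<lambda>(i, j). (2 * z + of_nat i + of_nat j) / (of_nat i + of_nat (j::nat)) :: complex"
  let ?S = "{(i, j). 1 \<le> i \<and> i \<le> j \<and> j \<le> a - 1}"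
  have fin: "finite ?S" by (rule finite_subset[of _ "{1..a} \<times> {1..a}"]) auto
  have eq: "{(i, j). 1 \<le> i \<and> i \<le> j \<and> j \<le> Suc a - 1} = ?S \<union> (\<lambda>i. (i, a)) ` {1..a}"
    by auto
  have disj: "?S \<inter> (\<lambda>i. (i, a)) ` {1..a} = {}" by auto
  have "pm (Suc a) z = prod ?f (?S \<union> (\<lambda>i. (i, a)) ` {1..a})" unfolding pm_def eq ..
  also have "\<dots> = prod ?f ?S * prod ?f ((\<lambda>i. (i, a)) ` {1..a})"
    by (rule prod.union_disjoint) (use fin disj in auto)
  also have "prod ?f ((\<lambda>i. (i, a)) ` {1..a}) = Rr a z"
    by (subst prod.reindex) (auto simp: inj_on_def Rr_def)
  finally show ?thesis by (simp add: pm_def)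
qed

lemma pm_0: "pm 0 z = 1"
  unfolding pm_def by (rule prod.neutral) auto
lemma pm_1: "pm 1 z = 1"
  unfolding pm_def by (rule prod.neutral) auto

lemma prod_shift1: "(\<Prod>i\<in>{1..a}. g i) = (\<Prod>i<a. g (Suc i))" for g :: "nat \<Rightarrow> complex"
  by (induction a) (auto simp: prod.cl_ivl_Suc)

lemma Rr_poch: "Rr a z = pochhammer (2 * z + of_nat a + 1) a / pochhammer (of_nat a + 1) a"
proof -
  have "Rr a z = (\<Prod>i<a. (2 * z + of_nat (Suc i) + of_nat a) / (of_nat (Suc i) + of_nat a))"
    unfolding Rr_def by (rule prod_shift1)
  also have "\<dots> = (\<Prod>i<a. (2 * z + of_nat a + 1) + of_nat i) / (\<Prod>i<a. (of_nat a + 1) + of_nat i)"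
    by (simp add: prod_dividef algebra_simps)
  also have "\<dots> = pochhammer (2 * z + of_nat a + 1) a / pochhammer (of_nat a + 1) a"
    by (simp add: pochhammer_prod atLeast0LessThan)
  finally show ?thesis .
qed

lemma poch2: "pochhammer c (n + 2) = c * (c + 1) * pochhammer (c + 2) n"
  for c :: complex
  by (simp add: pochhammer_rec numeral_2_eq_2 algebra_simps)

lemma poch2': "pochhammer c (n + 2) = pochhammer c n * (c + of_nat n) * (c + of_nat n + 1)"
  for c :: complex
  by (simp add: pochhammer_Suc numeral_2_eq_2 algebra_simps)

lemma of_nat_neg_eq: "of_nat m = - (of_nat k :: complex) \<Longrightarrow> m = 0"
proof -
  assume "of_nat m = - (of_nat k :: complex)"
  then have "of_nat (m + k) = (0::complex)" by (simp add: eq_neg_iff_add_eq_0)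
  then have "m + k = 0" by (simp only: of_nat_eq_0_iff)
  then show ?thesis by simp
qed

lemma poch_nz: "pochhammer (of_nat m) n \<noteq> (0::complex)" if "m > 0"
  using that of_nat_neg_eq by (auto simp: pochhammer_eq_0_iff)

lemma Rr_shift: "Rr a (z + 1) * ((2*z + of_nat a + 1) * (2*z + of_nat a + 2))
               = Rr a z * ((2*z + 2*of_nat a + 1) * (2*z + 2*of_nat a + 2))"
proof -
  let ?c = "2 * z + of_nat a + 1"
  have c2: "?c + 2 = 2 * (z + 1) + of_nat a + 1" by simp
  have "pochhammer (2 * (z + 1) + of_nat a + 1) a * (?c * (?c + 1)) = pochhammer ?c (a+2)"
    unfolding poch2[of ?c a] c2 by (simp only: mult_ac)
  also have "\<dots> = pochhammer ?c a * ((?c + of_nat a) * (?c + of_nat a + 1))"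
    unfolding poch2'[of ?c a] by (simp only: mult_ac)
  also have "(?c + of_nat a) * (?c + of_nat a + 1) = (2*z + 2*of_nat a + 1) * (2*z + 2*of_nat a + 2)"
    by (simp add: algebra_simps)
  finally have e: "pochhammer (2 * (z + 1) + of_nat a + 1) a * (?c * (?c + 1)) = pochhammer ?c a * ((2*z + 2*of_nat a + 1) * (2*z + 2*of_nat a + 2))" .
  have c1: "?c + 1 = 2*z + of_nat a + 2" by simp
  show ?thesis unfolding Rr_poch
    by (simp only: times_divide_eq_left e[unfolded c1])
qed

lemma Rr_succ: "Rr (Suc a) z * ((2*z + of_nat a + 1) * (2 * of_nat a + 1) * (2 * of_nat a + 2))
               = Rr a z * ((2*z + 2*of_nat a + 1) * (2*z + 2*of_nat a + 2) * (of_nat a + 1))"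
proof -
  define P1 where "P1 = pochhammer (2 * z + of_nat a + 1) a"
  define P2 where "P2 = pochhammer (2 * z + of_nat (Suc a) + 1) (Suc a)"
  define Q1 where "Q1 = pochhammer (of_nat a + 1 :: complex) a"
  define Q2 where "Q2 = pochhammer (of_nat (Suc a) + 1 :: complex) (Suc a)"
  have Q1: "Q1 \<noteq> 0" unfolding Q1_def using poch_nz[of "a+1" a] by (metis add.commute of_nat_Suc zero_less_Suc add_Suc_right add_0_right Suc_eq_plus1)
  have Q2: "Q2 \<noteq> 0" unfolding Q2_def using poch_nz[of "a+2" "Suc a"] by (simp add: add_ac)
  have f1: "(2*z + of_nat a + 1) * P2 = P1 * ((2*z + 2*of_nat a + 1) * (2*z + 2*of_nat a + 2))"
  proof -
    have "(2*z + of_nat a + 1) * P2 = pochhammer (2*z + of_nat a + 1) (a + 2)"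
      unfolding P2_def by (simp add: pochhammer_rec add_ac)
    also have "\<dots> = P1 * ((2*z + of_nat a + 1 + of_nat a) * (2*z + of_nat a + 1 + of_nat a + 1))"
      unfolding P1_def poch2' by (simp only: mult_ac)
    finally show ?thesis by (simp add: algebra_simps)
  qed
  have f2: "(of_nat a + 1) * Q2 = Q1 * ((2 * of_nat a + 1) * (2 * of_nat a + 2))"
  proof -
    have "(of_nat a + 1) * Q2 = pochhammer (of_nat a + 1 :: complex) (a + 2)"
      unfolding Q2_def by (simp add: pochhammer_rec add_ac)
    also have "\<dots> = Q1 * ((of_nat a + 1 + of_nat a) * (of_nat a + 1 + of_nat a + 1))"
      unfolding Q1_def poch2' by (simp only: mult_ac)
    finally show ?thesis by (simp add: algebra_simps)
  qed
  have "Rr (Suc a) z * ((2*z + of_nat a + 1) * (2 * of_nat a + 1) * (2 * of_nat a + 2)) * Q1 * Q2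
      = ((2*z + of_nat a + 1) * P2) * ((2 * of_nat a + 1) * (2 * of_nat a + 2) * Q1)"
    using Q2 unfolding Q2_def by (simp add: Rr_poch P2_def)
  also have "\<dots> = P1 * ((2*z + 2*of_nat a + 1) * (2*z + 2*of_nat a + 2)) * ((of_nat a + 1) * Q2)"
    unfolding f1 f2 by (simp only: mult_ac)
  also have "\<dots> = Rr a z * ((2*z + 2*of_nat a + 1) * (2*z + 2*of_nat a + 2) * (of_nat a + 1)) * Q1 * Q2"
    using Q1 by (simp add: Rr_poch P1_def Q1_def)
  finally show ?thesis using Q1 Q2 by simp
qed

lemma of_nat_nz: "(of_nat m + of_nat c :: complex) \<noteq> 0" if "c > 0"
proof -
  have "(of_nat (m + c)::complex) \<noteq> 0" unfolding of_nat_eq_0_iff using that by simp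
  then show ?thesis by simp
qed

lemma pm_shift:
  fixes N b :: nat
  defines "z \<equiv> (of_nat N :: complex)"
  shows "pm (Suc b) (z + 1) * pochhammer (2*z + 2) b = pm (Suc b) z * pochhammer (2*z + of_nat b + 3) b"
proof (induction b)
  case 0 then show ?case by (simp add: pm_Suc pm_0 Rr_def)
next
  case (Suc b)
  have nz: "2*z + of_nat b + 3 \<noteq> 0"
  proof -
    have "2*z + of_nat b + 3 = (of_nat (2*N+b+3)::complex)" by (simp add: z_def)
    moreover have "(of_nat (2*N+b+3)::complex) \<noteq> 0" by (simp only: of_nat_eq_0_iff)
    ultimately show ?thesis by simp
  qed
  have sh: "Rr (Suc b) (z + 1) * ((2*z + of_nat (Suc b) + 1) * (2*z + of_nat (Suc b) + 2))
          = Rr (Suc b) z * ((2*z + 2*of_nat (Suc b) + 1) * (2*z + 2*of_nat (Suc b) + 2))"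
    by (rule Rr_shift)
  have p1: "pochhammer (2*z + of_nat b + 3) (b + 2) = (2*z + of_nat b + 3) * pochhammer (2*z + of_nat (Suc b) + 3) (Suc b)"
    by (simp add: pochhammer_rec add_ac)
  have p2: "pochhammer (2*z + of_nat b + 3) (b + 2) = pochhammer (2*z + of_nat b + 3) b * ((2*z + of_nat b + 3 + of_nat b) * (2*z + of_nat b + 3 + of_nat b + 1))"
    unfolding poch2' by (simp only: mult_ac)
  have "(pm (Suc (Suc b)) (z + 1) * pochhammer (2*z + 2) (Suc b)) * (2*z + of_nat b + 3)
      = (pm (Suc b) (z + 1) * pochhammer (2*z + 2) b) * (Rr (Suc b) (z + 1) * ((2*z + of_nat (Suc b) + 1) * (2*z + of_nat (Suc b) + 2)))"
    by (simp add: pm_Suc pochhammer_Suc algebra_simps)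
  also have "\<dots> = pm (Suc b) z * pochhammer (2*z + of_nat b + 3) b * (Rr (Suc b) z * ((2*z + 2*of_nat (Suc b) + 1) * (2*z + 2*of_nat (Suc b) + 2)))"
    unfolding Suc.IH sh ..
  also have "\<dots> = pm (Suc b) z * Rr (Suc b) z * (pochhammer (2*z + of_nat b + 3) b * ((2*z + of_nat b + 3 + of_nat b) * (2*z + of_nat b + 3 + of_nat b + 1)))"
    by (simp add: algebra_simps)
  also have "\<dots> = (pm (Suc (Suc b)) z * pochhammer (2*z + of_nat (Suc b) + 3) (Suc b)) * (2*z + of_nat b + 3)"
    unfolding p2[symmetric] p1 pm_Suc[of "Suc b"] by (simp only: mult_ac)
  finally show ?case using nz by simp
qed

lemma Rr_nz: "Rr a (of_nat N) \<noteq> 0"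
proof -
  have "pochhammer (2 * of_nat N + of_nat a + 1 :: complex) a = pochhammer (of_nat (2*N + a + 1)) a" by (simp add: add_ac)
  moreover have "pochhammer (of_nat (2*N + a + 1) :: complex) a \<noteq> 0" by (rule poch_nz) simp
  moreover have "pochhammer (of_nat a + 1 :: complex) a = pochhammer (of_nat (a + 1)) a" by (simp add: add_ac)
  moreover have "pochhammer (of_nat (a + 1) :: complex) a \<noteq> 0" by (rule poch_nz) simp
  ultimately show ?thesis unfolding Rr_poch by simp
qed

lemma pm_nz: "pm k (of_nat N) \<noteq> 0"
  by (induction k) (auto simp: pm_0 pm_Suc Rr_nz)

lemma dodgson_pm:
  fixes n k :: nat
  defines "y \<equiv> (of_nat n :: complex)"
  shows "pm k (y + 2) * pm (k + 2) y = pm k (y + 1) * pm (k + 2) (y + 1) - pm (k + 1) (y + 1) ^ 2"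
proof (cases k)
  case 0
  have p2: "pm (Suc (Suc 0)) z = z + 1" for z
    by (simp add: pm_Suc pm_0 Rr_def field_simps)
  have p1: "pm (Suc 0) z = 1" for z
    by (simp add: pm_Suc pm_0 Rr_def)
  show ?thesis using 0 by (simp add: p2 p1 pm_0 numeral_2_eq_2)
next
  case (Suc b)
  define u where "u = pm (Suc b) (y + 1)"
  define r where "r = Rr (Suc b) (y + 1)"
  define r2 where "r2 = Rr (Suc (Suc b)) (y + 1)"
  define A where "A = pm (Suc b) (y + 2)"
  define Bv where "Bv = pm (Suc (Suc (Suc b))) y"
  define P where "P = pochhammer (2 * y + 4) b"
  define P' where "P' = pochhammer (2 * y + of_nat b + 5) b"
  define X6 where "X6 = (2 * y + 2 * of_nat b + 5) * (2 * y + 2 * of_nat b + 6)"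
  have y1: "y + 1 = of_nat (Suc n)" by (simp add: y_def)
  have Pnz: "P \<noteq> 0"
  proof -
    have "P = pochhammer (of_nat (2*n+4)) b" by (simp add: P_def y_def)
    then show ?thesis using poch_nz[of "2*n+4" b] by simp
  qed
  have P'nz: "P' \<noteq> 0"
  proof -
    have "P' = pochhammer (of_nat (2*n+b+5)) b" by (simp add: P'_def y_def)
    then show ?thesis using poch_nz[of "2*n+b+5" b] by simp
  qed
  have X6nz: "X6 \<noteq> 0"
  proof -
    have "X6 = of_nat ((2*n+2*b+5) * (2*n+2*b+6))" by (simp add: X6_def y_def)
    then show ?thesis by (simp only: of_nat_eq_0_iff) simp
  qed
  have b2nz: "(of_nat b + 2 :: complex) \<noteq> 0"
  proof -
    have "(of_nat b + 2 :: complex) = of_nat (b + 2)" by simp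
    then show ?thesis by (simp only: of_nat_eq_0_iff)
  qed
  have e1: "A * P = u * P'"
  proof -
    have "pm (Suc b) (of_nat (Suc n) + 1) * pochhammer (2 * of_nat (Suc n) + 2) b
        = pm (Suc b) (of_nat (Suc n)) * pochhammer (2 * of_nat (Suc n) + of_nat b + 3) b"
      by (rule pm_shift)
    then show ?thesis unfolding A_def P_def u_def P'_def y1[symmetric]
      by (simp add: algebra_simps)
  qed
  have e2: "u * r * r2 * ((2*y + 2) * (2*y + 3) * P) = Bv * (P' * X6)"
  proof -
    have "pm (Suc (Suc (Suc b))) (y + 1) * pochhammer (2 * y + 2) (Suc (Suc b))
        = pm (Suc (Suc (Suc b))) y * pochhammer (2 * y + of_nat (Suc (Suc b)) + 3) (Suc (Suc b))"
      unfolding y_def by (rule pm_shift)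
    moreover have "pochhammer (2 * y + 2) (Suc (Suc b)) = (2*y + 2) * (2*y + 3) * P"
      using poch2[of "2*y+2" b] by (simp add: P_def algebra_simps numeral_2_eq_2)
    moreover have "pochhammer (2 * y + of_nat (Suc (Suc b)) + 3) (Suc (Suc b)) = P' * X6"
      using poch2'[of "2 * y + of_nat b + 5" b] by (simp add: P'_def X6_def algebra_simps numeral_2_eq_2)
    moreover have "pm (Suc (Suc (Suc b))) (y + 1) = u * r * r2"
      by (simp add: u_def r_def r2_def pm_Suc)
    ultimately show ?thesis by (simp add: Bv_def mult.assoc)
  qed
  have e3: "r2 * ((2*y + of_nat b + 4) * (2*of_nat b + 3) * (2*of_nat b + 4))
          = r * (X6 * (of_nat b + 2))"
    using Rr_succ[of "Suc b" "y + 1"] unfolding r_def r2_def X6_def by (simp add: algebra_simps)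
  have rX6: "r * X6 = r2 * (2 * (2*y + of_nat b + 4) * (2*of_nat b + 3))"
  proof -
    have "(r * X6) * (of_nat b + 2) = (r2 * (2 * (2*y + of_nat b + 4) * (2*of_nat b + 3))) * (of_nat b + 2)"
      using e3 by (simp add: algebra_simps)
    then show ?thesis using b2nz by simp
  qed
  have key: "r2 * ((2*y + 2) * (2*y + 3)) = (r2 - r) * X6"
  proof -
    have "(r2 - r) * X6 = r2 * X6 - r * X6" by (simp add: algebra_simps)
    also have "\<dots> = r2 * (X6 - 2 * (2*y + of_nat b + 4) * (2*of_nat b + 3))"
      unfolding rX6 by (simp add: algebra_simps)
    also have "X6 - 2 * (2*y + of_nat b + 4) * (2*of_nat b + 3) = (2*y + 2) * (2*y + 3)"
      unfolding X6_def by (simp add: algebra_simps)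
    finally show ?thesis by simp
  qed
  have "A * Bv * (P * P' * X6) = (A * P) * (Bv * (P' * X6))" by (simp add: mult_ac)
  also have "\<dots> = (u * P') * (u * r * r2 * ((2*y + 2) * (2*y + 3) * P))" by (simp add: e1 e2)
  also have "\<dots> = u * u * r * (r2 * ((2*y + 2) * (2*y + 3))) * (P * P')" by (simp add: mult_ac)
  also have "\<dots> = u * u * r * (r2 - r) * (P * P' * X6)" unfolding key by (simp add: mult_ac)
  finally have "A * Bv = u * u * r * (r2 - r)" using Pnz P'nz X6nz by simp
  moreover have "pm k (y + 1) * pm (k + 2) (y + 1) - pm (k + 1) (y + 1) ^ 2 = u * u * r * (r2 - r)"
    by (simp add: Suc u_def r_def r2_def pm_Suc power2_eq_square algebra_simps)
  ultimately show ?thesis by (simp add: Suc A_def Bv_def)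
qed

lemma cat_c: "of_nat (Suc k) * cat k = of_nat ((2*k) choose k)"
proof (cases k)
  case 0 then show ?thesis by simp
next
  case (Suc j)
  have t: "cat k = of_nat ((2*k) choose k) - of_nat ((2*k) choose j)"
    using cat_Tb[of k] by (simp add: Tb_def Suc mult_2 del: binomial_Suc_Suc cat.simps)
  have e: "Suc (j + Suc j) = 2*k" using Suc by simp
  have l: "Suc j * (2*k choose Suc j) = Suc (Suc j) * (2*k choose j)"
    using Suc_times_binomial_add[of j "Suc j"] unfolding e .
  have nat: "Suc k * ((2*k) choose j) = k * ((2*k) choose k)"
    using l unfolding Suc[symmetric] by (rule sym)
  have "of_nat (Suc k) * cat k = of_nat (Suc k) * of_nat ((2*k) choose k) - of_nat (Suc k) * of_nat ((2*k) choose j)"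
    unfolding t by (simp only: right_diff_distrib)
  also have "of_nat (Suc k) * of_nat ((2*k) choose j) = (of_nat (k * ((2*k) choose k)) :: complex)"
    unfolding nat[symmetric] by (simp only: of_nat_mult)
  also have "of_nat (Suc k) * of_nat ((2*k) choose k) - of_nat (k * ((2*k) choose k)) = (of_nat ((2*k) choose k) :: complex)"
    by (simp add: algebra_simps del: binomial_Suc_Suc)
  finally show ?thesis .
qed

lemma c_rec: "Suc k * ((2 * Suc k) choose Suc k) = 2 * (2*k+1) * ((2*k) choose k)"
proof -
  have e1: "2 * Suc k = Suc (2*k+1)" by simp
  have a: "Suc k * ((2 * Suc k) choose Suc k) = Suc (2*k+1) * ((2*k+1) choose k)"
    unfolding e1 by (rule Suc_times_binomial)
  have e2: "Suc (k + k) = 2*k+1" by simp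
  have sym: "((2*k+1) choose k) = ((2*k+1) choose Suc k)"
  proof -
    have "Suc k * (2*k+1 choose Suc k) = Suc k * (2*k+1 choose k)"
      using Suc_times_binomial_add[of k k] unfolding e2 .
    then show ?thesis by (simp only: nat_mult_eq_cancel1[OF zero_less_Suc])
  qed
  have b: "Suc k * ((2*k+1) choose Suc k) = (2*k+1) * ((2*k) choose k)"
    using Suc_times_binomial_eq[of "2*k" k] by (simp add: mult.commute del: binomial_Suc_Suc)
  have "Suc k * (Suc k * ((2 * Suc k) choose Suc k)) = Suc (2*k+1) * (Suc k * ((2*k+1) choose Suc k))"
    unfolding a sym by (simp only: mult_ac)
  also have "\<dots> = Suc k * (2 * (2*k+1) * ((2*k) choose k))" unfolding b by simp
  finally show ?thesis by (simp only: mult_cancel1) simp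
qed

lemma cat_rec: "cat (Suc k) * (of_nat k + 2) = cat k * (2 * (2 * of_nat k + 1))"
proof -
  have "cat (Suc k) * (of_nat k + 2) * of_nat (Suc k) = of_nat (Suc k) * (of_nat (Suc (Suc k)) * cat (Suc k))"
    by (simp add: algebra_simps del: cat.simps)
  also have "of_nat (Suc (Suc k)) * cat (Suc k) = of_nat ((2 * Suc k) choose Suc k)" by (rule cat_c)
  also have "of_nat (Suc k) * of_nat ((2 * Suc k) choose Suc k) = (of_nat (Suc k * ((2 * Suc k) choose Suc k)) :: complex)"
    by (simp only: of_nat_mult)
  also have "\<dots> = of_nat (2 * (2*k+1)) * of_nat ((2*k) choose k)" unfolding c_rec by (simp only: of_nat_mult)
  also have "\<dots> = of_nat (2 * (2*k+1)) * (of_nat (Suc k) * cat k)" unfolding cat_c ..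
  also have "\<dots> = cat k * (2 * (2 * of_nat k + 1)) * of_nat (Suc k)" by (simp add: algebra_simps del: cat.simps)
  finally show ?thesis by (simp del: of_nat_Suc cat.simps)
qed

lemma Rr_0: "Rr a 0 = 1"
  unfolding Rr_def
proof (rule prod.neutral, rule ballI)
  fix i assume "i \<in> {1..a}"
  then have "(of_nat a + of_nat i :: complex) \<noteq> 0" by (intro of_nat_nz) simp
  then show "(2 * 0 + of_nat i + of_nat a) / (of_nat i + of_nat a) = (1::complex)" by (simp add: add.commute)
qed

lemma pm_at0: "pm k 0 = 1"
  by (induction k) (auto simp: pm_0 pm_Suc Rr_0)

lemma pm_one: "pm k 1 = cat k"
proof (induction k)
  case 0 then show ?case by (simp add: pm_0)
next
  case (Suc k)
  have sh: "Rr k (0 + 1) * ((2*0 + of_nat k + 1) * (2*0 + of_nat k + 2))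
          = Rr k 0 * ((2*0 + 2*of_nat k + 1) * (2*0 + 2*of_nat k + 2))"
    by (rule Rr_shift)
  then have "Rr k 1 * (of_nat k + 2) * (of_nat k + 1) = (2 * (2 * of_nat k + 1)) * (of_nat k + 1)"
    by (simp add: Rr_0 algebra_simps)
  then have r: "Rr k 1 * (of_nat k + 2) = 2 * (2 * of_nat k + 1)"
    by (metis (no_types) mult_right_cancel of_nat_Suc of_nat_eq_0_iff add.commute nat.distinct(1))
  have nz: "(of_nat k + 2 :: complex) \<noteq> 0"
  proof -
    have "(of_nat k + 2 :: complex) = of_nat (k + 2)" by simp
    then show ?thesis by (simp only: of_nat_eq_0_iff)
  qed
  have "pm (Suc k) 1 * (of_nat k + 2) = cat k * (Rr k 1 * (of_nat k + 2))"
    by (simp add: pm_Suc Suc.IH)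
  also have "\<dots> = cat (Suc k) * (of_nat k + 2)" unfolding r cat_rec ..
  finally show ?case using nz by simp
qed

lemma hank_shift: "hank (\<lambda>t. f (t + k)) s m = hank f (k + s) m"
  unfolding hank_def by (simp add: add_ac)

theorem hank_cat: "hank cat k N = pm k (of_nat N)"
proof (induction N arbitrary: k rule: less_induct)
  case (less N)
  show ?case
  proof (cases N)
    case 0
    then show ?thesis by (simp add: hank_def pm_at0)
  next
    case (Suc N1)
    show ?thesis
    proof (cases N1)
      case 0
      have "hank cat k 1 = cat k" unfolding hank_def by (subst det_single) auto
      then show ?thesis using Suc 0 pm_one by simp
    next
      case (Suc n)
      have N: "N = n + 2" using \<open>N = Suc N1\<close> Suc by simp
      have IH: "hank cat j m = pm j (of_nat m)" if "m < N" for j m using less.IH[OF that] .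
      have "hank cat (k+2) n = pm (k+2) (of_nat n)" using IH[of n] N by simp
      then have nz: "hank (\<lambda>t. cat (t + k)) 2 n \<noteq> 0"
        unfolding hank_shift using pm_nz by simp
      have dj: "hank (\<lambda>t. cat (t + k)) 0 (n+2) * hank (\<lambda>t. cat (t + k)) 2 n
            = hank (\<lambda>t. cat (t + k)) 0 (n+1) * hank (\<lambda>t. cat (t + k)) 2 (n+1) - hank (\<lambda>t. cat (t + k)) 1 (n+1) ^ 2"
        by (rule hankel_dj[OF nz])
      then have "hank cat k N * pm (k+2) (of_nat n)
          = pm k (of_nat n + 1) * pm (k+2) (of_nat n + 1) - pm (k+1) (of_nat n + 1) ^ 2"
        unfolding hank_shift using IH[of n] IH[of "n+1"] N by (simp add: add_ac)
      also have "\<dots> = pm k (of_nat n + 2) * pm (k + 2) (of_nat n)"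
        using dodgson_pm[of k n] by simp
      finally show ?thesis using pm_nz[of "k+2" n] N by (simp add: add_ac)
    qed
  qed
qed

definition Jm :: "nat \<Rightarrow> complex mat" where
  "Jm n = mat n n (\<lambda>(i,j). if i + j = n - 1 then 1 else 0)"

lemma Jm_carrier: "Jm n \<in> carrier_mat n n" by (simp add: Jm_def)

lemma det_Jm: "det (Jm n) = (-1) ^ (\<Sum>i<n. i)"
proof (induction n)
  case 0 then show ?case by (simp add: Jm_def)
next
  case (Suc n)
  have c: "Jm (Suc n) \<in> carrier_mat (1 + n) (1 + n)" by (simp add: Jm_def)
  have "det (Jm (Suc n)) = (-1)^(1*n) * det (mat (1 + n) (1 + n) (\<lambda>(i,j). Jm (Suc n) $$ ((if i < 1 then i + n else i - 1), j)))"
    by (rule det_swap_rows[OF c])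
  also have "mat (1 + n) (1 + n) (\<lambda>(i,j). Jm (Suc n) $$ ((if i < 1 then i + n else i - 1), j))
      = four_block_mat (1\<^sub>m 1) (0\<^sub>m 1 n) (0\<^sub>m n 1) (Jm n)"
    by (rule eq_matI) (auto simp: Jm_def)
  also have "det (four_block_mat (1\<^sub>m 1) (0\<^sub>m 1 n) (0\<^sub>m n 1) (Jm n)) = det (1\<^sub>m 1 :: complex mat) * det (Jm n)"
    by (rule det_four_block_mat_upper_right_zero) (auto simp: Jm_def)
  finally show ?case using Suc.IH by (simp add: power_add)
qed

lemma Jm_mult: assumes "A \<in> carrier_mat n n"
  shows "Jm n * A = mat n n (\<lambda>(i,j). A $$ (n - 1 - i, j))"
proof (rule eq_matI)
  fix i j assume ij: "i < dim_row (mat n n (\<lambda>(i,j). A $$ (n - 1 - i, j)))" "j < dim_col (mat n n (\<lambda>(i,j). A $$ (n - 1 - i, j)))"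
  then have i: "i < n" and j: "j < n" by auto
  have "(Jm n * A) $$ (i,j) = (\<Sum>t<n. Jm n $$ (i,t) * A $$ (t,j))"
    by (rule mult_entry[OF Jm_carrier assms i j])
  also have "\<dots> = (\<Sum>t<n. if t = n - 1 - i then A $$ (t,j) else 0)"
    by (rule sum.cong) (use i in \<open>auto simp: Jm_def\<close>)
  also have "\<dots> = A $$ (n - 1 - i, j)" using i by simp
  finally show "(Jm n * A) $$ (i,j) = mat n n (\<lambda>(i,j). A $$ (n - 1 - i, j)) $$ (i,j)" using i j by simp
qed (use assms in \<open>auto simp: Jm_def\<close>)

lemma det_rev_rows:
  fixes F :: "nat \<Rightarrow> nat \<Rightarrow> complex"
  shows "det (mat n n (\<lambda>(i,j). F (n - 1 - i) j)) = (-1) ^ (\<Sum>i<n. i) * det (mat n n (\<lambda>(i,j). F i j))"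
proof -
  have c: "mat n n (\<lambda>(i,j). F i j) \<in> carrier_mat n n" by simp
  have "mat n n (\<lambda>(i,j). F (n - 1 - i) j) = Jm n * mat n n (\<lambda>(i,j). F i j)"
    unfolding Jm_mult[OF c] by (rule eq_matI) auto
  then show ?thesis using det_mult[OF Jm_carrier c] det_Jm by simp
qed

lemma tri_add: "(\<Sum>i<a + b. i) = (\<Sum>i<a. i) + (\<Sum>i<b. i) + a * (b::nat)"
  by (induction b) auto

lemma tri_2: "2 * (\<Sum>i<Suc k. i) = k * Suc (k::nat)"
  by (induction k) auto

definition Sset :: "nat \<Rightarrow> (nat \<times> nat) set" where
  "Sset k = {(i, j). 1 \<le> i \<and> i \<le> j \<and> j \<le> k - 1}"

lemma Sset_fin: "finite (Sset k)"
  by (rule finite_subset[of _ "{1..k} \<times> {1..k}"]) (auto simp: Sset_def)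

lemma card_Sset: "card (Sset k) = (\<Sum>i<k. i)"
proof (induction k)
  case 0
  have "Sset 0 = {}" by (auto simp: Sset_def)
  then show ?case by simp
next
  case (Suc a)
  have eq: "Sset (Suc a) = Sset a \<union> (\<lambda>i. (i, a)) ` {1..a}" by (auto simp: Sset_def)
  have disj: "Sset a \<inter> (\<lambda>i. (i, a)) ` {1..a} = {}" by (auto simp: Sset_def)
  have "card (Sset (Suc a)) = card (Sset a) + card ((\<lambda>i. (i, a)) ` {1..a})"
    unfolding eq by (rule card_Un_disjoint) (use Sset_fin disj in auto)
  also have "card ((\<lambda>i. (i, a)) ` {1..a}) = a" by (subst card_image) (auto simp: inj_on_def)
  finally show ?case using Suc.IH by simp
qed

lemma pm_reflect:
  "pm (m+1) (- of_nat (N+m+1)) = (-1)^(\<Sum>i<m+1. i) * pm (m+1) (of_nat N)"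
proof -
  define S where "S = Sset (m+1)"
  define h where "h = (\<lambda>(i::nat, j::nat). (m + 1 - j, m + 1 - i))"
  have Sd: "S = {(i, j). 1 \<le> i \<and> i \<le> j \<and> j \<le> m}" by (simp add: S_def Sset_def)
  have fin: "finite S" unfolding S_def by (rule Sset_fin)
  have pmS: "pm (m+1) z = (\<Prod>(i,j)\<in>S. (2 * z + of_nat i + of_nat j) / (of_nat i + of_nat j))" for z
    by (simp add: pm_def S_def Sset_def)
  define num where "num = (\<lambda>x::nat\<times>nat. 2 * of_nat N + of_nat (m+1 - snd x) + (of_nat (m+1 - fst x) :: complex))"
  define den where "den = (\<lambda>x::nat\<times>nat. of_nat (fst x) + (of_nat (snd x) :: complex))"
  have "pm (m+1) (- of_nat (N+m+1)) = (\<Prod>x\<in>S. (-1) * (num x / den x))"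
    unfolding pmS
  proof (rule prod.cong)
    fix x assume "x \<in> S"
    then obtain i j where x: "x = (i,j)" and ij: "1 \<le> i" "i \<le> j" "j \<le> m" by (auto simp: Sd)
    have f1: "of_nat (m+1-j) = (of_nat m + 1 - of_nat j :: complex)" using ij by (simp add: of_nat_diff)
    have f2: "of_nat (m+1-i) = (of_nat m + 1 - of_nat i :: complex)" using ij by (simp add: of_nat_diff)
    show "(case x of (i, j) \<Rightarrow> (2 * - of_nat (N + m + 1) + of_nat i + of_nat j) / (of_nat i + of_nat j))
        = (-1) * (num x / den x)"
      unfolding x num_def den_def by (simp only: prod.case fst_conv snd_conv f1 f2) (simp add: field_simps)
  qed simp
  also have "\<dots> = (\<Prod>x\<in>S. (-1::complex)) * ((\<Prod>x\<in>S. num x) / (\<Prod>x\<in>S. den x))"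
    by (simp only: prod.distrib prod_dividef)
  also have "(\<Prod>x\<in>S. (-1::complex)) = (-1)^(\<Sum>i<m+1. i)" using card_Sset[of "m+1"] by (simp add: S_def)
  also have "(\<Prod>x\<in>S. num x) = (\<Prod>(i,j)\<in>S. 2 * of_nat N + of_nat i + (of_nat j :: complex))"
    unfolding num_def by (rule prod.reindex_bij_witness[where i = h and j = h]) (auto simp: h_def Sd add_ac)
  also have "(\<Prod>(i,j)\<in>S. 2 * of_nat N + of_nat i + (of_nat j :: complex)) / (\<Prod>x\<in>S. den x)
      = pm (m+1) (of_nat N)"
    unfolding pmS den_def by (simp add: prod_dividef case_prod_unfold)
  finally show ?thesis .
qed

lemma neg1_sq: "((-1::complex)^k) * (-1)^k = 1"
  by (simp add: power_mult_distrib[symmetric])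

theorem theorem6:
  fixes b :: complex and m :: nat and n :: nat
  assumes "m \<ge> 1"
  shows "Dm (- int m) b n = pm (m + 1) (- of_nat n)"
proof -
  define H where "H = mat n n (\<lambda>(i,j). Mb b (- int m + int i + int j))"
  have Dm: "Dm (- int m) b n = det H" by (simp add: Dm_def H_def)
  consider "n = 0" | "1 \<le> n" "n \<le> m" | "m + 1 \<le> n" by linarith
  then show ?thesis
  proof cases
    case 1
    then show ?thesis unfolding Dm by (simp add: H_def pm_at0)
  next
    case 2
    have Hc: "H \<in> carrier_mat n n" by (simp add: H_def)
    have "multrow 0 0 H = H"
    proof (rule eq_matI)
      fix i j assume ij: "i < dim_row H" "j < dim_col H"
      show "multrow 0 0 H $$ (i,j) = H $$ (i,j)"
      proof (cases "i = 0")
        case True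
        have "- int m + int i + int j < 0" using True ij 2 by (simp add: H_def)
        then have "H $$ (i,j) = 0" using ij by (simp add: H_def Mb_def)
        then show ?thesis using ij True by simp
      next
        case False then show ?thesis using ij by simp
      qed
    qed auto
    then have "det H = 0 * det H" using det_multrow[of 0 n H 0] Hc 2 by simp
    then have dH: "det H = 0" by simp
    have "pm (m+1) (- of_nat n) = 0"
    proof -
      have "pm (m+1) (- of_nat n) = (\<Prod>x\<in>Sset (m+1). (case x of (i,j) \<Rightarrow> (2 * (- of_nat n) + of_nat i + of_nat j) / (of_nat i + of_nat j)))"
        by (simp add: pm_def Sset_def)
      also have "\<dots> = 0"
      proof (rule prod_zero[OF Sset_fin])
        have "(n,n) \<in> Sset (m+1)" using 2 by (simp add: Sset_def)
        moreover have "(case (n,n) of (i,j) \<Rightarrow> (2 * (- of_nat n) + of_nat i + of_nat j) / (of_nat i + of_nat j)) = (0::complex)"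
          by simp
        ultimately show "\<exists>x\<in>Sset (m+1). (case x of (i,j) \<Rightarrow> (2 * (- of_nat n) + of_nat i + of_nat j) / (of_nat i + of_nat j)) = (0::complex)"
          by blast
      qed
      finally show ?thesis .
    qed
    then show ?thesis unfolding Dm dH by simp
  next
    case 3
    have "\<exists>N. n = N + m + 1" using 3 by (intro exI[of _ "n - m - 1"]) simp
    then obtain N where nN: "n = N + m + 1" by blast
    define a where "a = fps_nth (AA b)"
    define g where "g = fps_nth (GG b)"
    define X where "X = mat n n (\<lambda>(i,j). if i \<le> N + j then a (N + j - i) else 0)"
    define W1 where "W1 = mat N N (\<lambda>(i,p). if i \<le> n + p then g (n + p - i) else 0)"
    define C' where "C' = mat N N (\<lambda>(i,p). cat (N + m + p - i))"
    define T where "T = (\<lambda>k::nat. \<Sum>i<k. i)"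
    have a_Mb: "a t = Mb b (int t)" for t by (simp add: a_def AA_def)
    have s1: "det X = (-1)^(T n) * det H"
    proof -
      have "X = mat n n (\<lambda>(i,j). Mb b (- int m + int (n - 1 - i) + int j))"
      proof (rule eq_matI)
        fix i j assume ij: "i < dim_row (mat n n (\<lambda>(i,j). Mb b (- int m + int (n - 1 - i) + int j)))"
            "j < dim_col (mat n n (\<lambda>(i,j). Mb b (- int m + int (n - 1 - i) + int j)))"
        then have i: "i < n" and j: "j < n" by auto
        have e: "- int m + int (n - 1 - i) + int j = int N + int j - int i" using i nN by simp
        have r: "mat n n (\<lambda>(i,j). Mb b (- int m + int (n - 1 - i) + int j)) $$ (i,j) = Mb b (int N + int j - int i)"
          using i j by (simp only: index_mat(1) prod.case e)
        have "X $$ (i,j) = Mb b (int N + int j - int i)"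
        proof (cases "i \<le> N + j")
          case True
          then have "int N + int j - int i = int (N + j - i)" by simp
          then show ?thesis using True i j by (simp add: X_def a_Mb)
        next
          case False
          then have "int N + int j - int i < 0" by simp
          then show ?thesis using False i j by (simp add: X_def Mb_def)
        qed
        then show "X $$ (i,j) = mat n n (\<lambda>(i,j). Mb b (- int m + int (n - 1 - i) + int j)) $$ (i,j)"
          unfolding r .
      qed (auto simp: X_def)
      then show ?thesis
        using det_rev_rows[of n "\<lambda>i j. Mb b (- int m + int i + int j)"] by (simp add: H_def T_def)
    qed
    have s2: "det X = (-1)^(n*N) * det W1"
      unfolding X_def W1_def
      by (rule jacobi_toeplitz) (simp_all add: a_def g_def AA_nth0 AA_GG_conv)
    have s3: "det W1 = (-1)^N * det C'"
    proof -
      have "W1 = (-1) \<cdot>\<^sub>m C'"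
      proof (rule eq_matI)
        fix i p assume ip: "i < dim_row ((-1) \<cdot>\<^sub>m C')" "p < dim_col ((-1) \<cdot>\<^sub>m C')"
        then have i: "i < N" and p: "p < N" by (auto simp: C'_def)
        obtain l where l: "N + m + p - i = Suc l" using i by (metis add_diff_inverse_nat less_imp_le_nat Nat.add_diff_assoc2 zero_less_diff add_gr_0 gr0_implies_Suc)
        have e: "n + p - i = Suc (Suc l)" using l nN i by simp
        have "i \<le> n + p" using i nN by simp
        then show "W1 $$ (i,p) = ((-1) \<cdot>\<^sub>m C') $$ (i,p)"
          using i p e l by (simp add: W1_def C'_def g_def GG_nth)
      qed (auto simp: W1_def C'_def)
      then show ?thesis by (simp add: C'_def)
    qed
    have s4: "det C' = (-1)^(T N) * hank cat (m+1) N"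
    proof -
      have "C' = mat N N (\<lambda>(i,j). cat ((N - 1 - i) + j + (m+1)))"
        by (rule eq_matI) (auto simp: C'_def simp del: cat.simps intro!: arg_cong[where f=cat])
      then show ?thesis
        using det_rev_rows[of N "\<lambda>i j. cat (i + j + (m+1))"] by (simp add: hank_def T_def)
    qed
    have s5: "hank cat (m+1) N = pm (m+1) (of_nat N)" by (rule hank_cat)
    have s6: "pm (m+1) (- of_nat n) = (-1)^(T (m+1)) * pm (m+1) (of_nat N)"
      unfolding nN T_def by (rule pm_reflect)
    have tot: "T n + n*N + N + T N = T (m+1) + 2 * (T N + N*(m+1) + T (Suc N))"
    proof -
      have "T n = T N + T (m+1) + N*(m+1)" unfolding T_def nN
        using tri_add[of N "m+1"] by (simp add: add.assoc)
      moreover have "2 * T (Suc N) = N * Suc N" unfolding T_def by (rule tri_2)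
      ultimately show ?thesis using nN by (simp add: algebra_simps)
    qed
    have "det H = (-1)^(T n) * det X"
      using s1 neg1_sq[of "T n"] by (simp add: mult.assoc[symmetric])
    also have "\<dots> = (-1)^(T n + n*N + N + T N) * pm (m+1) (of_nat N)"
      unfolding s2 s3 s4 s5 by (simp add: power_add mult_ac)
    also have "(-1::complex)^(T n + n*N + N + T N) = (-1)^(T (m+1))"
      unfolding tot by (simp add: power_add power_mult)
    finally show ?thesis unfolding Dm s6 .
  qed
qed

end
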